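(* Let $(G,\Sigma)$ be an $n$-vertex signed graph and let $v,w$ be non-adjacent vertices of $G$ with degrees $d_1,d_2$, such that $N^-(v)=\emptyset$ and $N^-(w)\subseteq N(v)\cap N(w)$. Set $V_1=N^+(v)\setminus N(w)$, $V_2=N^+(w)\setminus N(v)$, $V_3=N^+(v)\cap N^+(w)$, $V_4=N^+(v)\cap N^-(w)$, $V_5=V(G)\setminus(N(v)\cup N(w)\cup\{v,w\})$, and order the vertices as $v,w,V_1,V_2,V_3,V_4,V_5$. Suppose spectral integral variation of type 2 occurs under the addition of an even edge $vw$, increasing the eigenvalues $\lambda_1,\lambda_2$ of $L(G,\Sigma)$ by $1$, and that there is an orthogonal basis $v_1,\dots,v_n$ of eigenvectors of $L(G,\Sigma)$ such that: (1) for $i\in\{1,2\}$, $v_i$ is a $\lambda_i$-eigenvector with first two entries $a_i,b_i$ satisfying $(a_i-b_i)^2/\|v_i\|^2=1+1/(\lambda_{3-i}-\lambda_i)$; (2) for $j\in\{3,\dots,n\}$ the first two entries of $v_j$ are equal; and (3) for $i\in\{1,2\}$, the vector obtained from $v_i$ by deleting its first two entries equals $x_2-x_1$, where $x_1,x_2$ are the first and second columns of $L(G,\Sigma)$ with their first two entries deleted (i.e. it equals $\mathbf{1}$ on $V_1$, $-\mathbf{1}$ on $V_2$, $\mathbf{0}$ on $V_3$, $2\cdot\mathbf{1}$ on $V_4$, $\mathbf{0}$ on $V_5$). Then for each $i\in\{1,2\}$, $a_i=-\lambda_i+d_2+1$ and $b_i=\lambda_i-d_1-1$.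
   Context: All graphs are finite and simple. A signed graph is a pair $(G,\Sigma)$ with $\Sigma\subseteq E(G)$; edges in $\Sigma$ are odd, the others even. $N^-(u)$ (resp. $N^+(u)$) is the set of neighbors joined to $u$ by an odd (resp. even) edge, and $N(u)=N^-(u)\cup N^+(u)$. The signed Laplacian is $L(G,\Sigma)=D(G)-A(G,\Sigma)$, $D(G)$ the diagonal degree matrix, $A(G,\Sigma)$ having $(i,j)$-entry $1$ for an even edge, $-1$ for an odd edge, $0$ otherwise. Adding an even edge $vw$ means passing from $L(G,\Sigma)$ to $L(G+vw,\Sigma)$. Spectral integral variation of type 2 means the multiset of eigenvalues of $L(G+vw,\Sigma)$ is obtained from that of $L(G,\Sigma)$ by increasing two eigenvalues (counted with multiplicity) by $1$ each. *)

theory Defs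
  imports "Jordan_Normal_Form.Char_Poly" "HOL-Computational_Algebra.Polynomial"
begin

text \<open>Signed graphs on the vertex set {0..<n}. Edges are 2-element sets {x,y};
  the odd edges form a subset Sg of the edge set.\<close>

definition signed_graph :: "nat \<Rightarrow> nat set set \<Rightarrow> nat set set \<Rightarrow> bool" where
  "signed_graph n E Sg \<longleftrightarrow>
     (\<forall>e\<in>E. \<exists>x y. e = {x, y} \<and> x \<noteq> y \<and> x < n \<and> y < n) \<and> Sg \<subseteq> E"

definition nbr :: "nat \<Rightarrow> nat set set \<Rightarrow> nat \<Rightarrow> nat set" where
  "nbr n E u = {x. x < n \<and> {u, x} \<in> E}"

definition nbr_minus :: "nat \<Rightarrow> nat set set \<Rightarrow> nat set set \<Rightarrow> nat \<Rightarrow> nat set" where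
  "nbr_minus n E Sg u = {x. x < n \<and> {u, x} \<in> E \<and> {u, x} \<in> Sg}"

definition nbr_plus :: "nat \<Rightarrow> nat set set \<Rightarrow> nat set set \<Rightarrow> nat \<Rightarrow> nat set" where
  "nbr_plus n E Sg u = {x. x < n \<and> {u, x} \<in> E \<and> {u, x} \<notin> Sg}"

definition vdegree :: "nat \<Rightarrow> nat set set \<Rightarrow> nat \<Rightarrow> nat" where
  "vdegree n E u = card (nbr n E u)"

text \<open>Signed Laplacian L = D - A, with A(i,j) = 1 for an even edge, -1 for an odd edge.\<close>
definition signed_laplacian :: "nat \<Rightarrow> nat set set \<Rightarrow> nat set set \<Rightarrow> real mat" where
  "signed_laplacian n E Sg = mat n n (\<lambda>(i, j).
     if i = j then real (vdegree n E i)
     else if {i, j} \<in> E then (if {i, j} \<in> Sg then 1 else -1)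
     else 0)"

definition eigenvalues_mset :: "real mat \<Rightarrow> real multiset" where
  "eigenvalues_mset A = proots (char_poly A)"

definition siv_type2 :: "nat \<Rightarrow> nat set set \<Rightarrow> nat set set \<Rightarrow> nat \<Rightarrow> nat \<Rightarrow> real \<Rightarrow> real \<Rightarrow> bool" where
  "siv_type2 n E Sg v w l1 l2 \<longleftrightarrow>
     {#l1, l2#} \<subseteq># eigenvalues_mset (signed_laplacian n E Sg) \<and>
     eigenvalues_mset (signed_laplacian n (insert {v, w} E) Sg)
       = eigenvalues_mset (signed_laplacian n E Sg) - {#l1, l2#} + {#l1 + 1, l2 + 1#}"

end

theory Submission
  imports Defs
begin

lemma self_sprod_pos:
  fixes x :: "real vec"
  assumes "x \<in> carrier_vec n" "x \<noteq> 0\<^sub>v n"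
  shows "x \<bullet> x > 0"
proof -
  have ge: "x \<bullet> x \<ge> 0" unfolding scalar_prod_def by (intro sum_nonneg) auto
  have "x \<bullet> x \<noteq> 0"
  proof
    assume "x \<bullet> x = 0"
    hence "\<forall>i\<in>{0..<dim_vec x}. x $ i * x $ i = 0"
      unfolding scalar_prod_def by (subst (asm) sum_nonneg_eq_0_iff) auto
    hence "x = 0\<^sub>v n" using assms(1) by (intro eq_vecI) auto
    thus False using assms(2) by simp
  qed
  thus ?thesis using ge by simp
qed

lemma orth_complete:
  fixes vs :: "nat \<Rightarrow> real vec"
  assumes car: "\<forall>j\<in>{1..n}. vs j \<in> carrier_vec n"
    and nz: "\<forall>j\<in>{1..n}. vs j \<noteq> 0\<^sub>v n"
    and orth: "\<forall>j\<in>{1..n}. \<forall>k\<in>{1..n}. j \<noteq> k \<longrightarrow> vs j \<bullet> vs k = 0"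
    and z: "z \<in> carrier_vec n"
    and zo: "\<forall>j\<in>{1..n}. vs j \<bullet> z = 0"
  shows "z = 0\<^sub>v n"
proof (rule ccontr)
  assume zn: "z \<noteq> 0\<^sub>v n"
  define M where "M = mat n n (\<lambda>(j,k). vs (Suc j) $ k)"
  have Mc: "M \<in> carrier_mat n n" unfolding M_def by simp
  have rowM: "row M j = vs (Suc j)" if "j < n" for j
  proof -
    have "vs (Suc j) \<in> carrier_vec n" using car that by auto
    thus ?thesis using that unfolding M_def by (intro eq_vecI) auto
  qed
  have "M *\<^sub>v z = 0\<^sub>v n"
    using zo rowM z Mc by (intro eq_vecI) auto
  hence d0: "det M = 0" using det_0_iff_vec_prod_zero[OF Mc] z zn by blast
  define G where "G = M * transpose_mat M"
  have Gc: "G \<in> carrier_mat n n" unfolding G_def using Mc by simp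
  have Gij: "G $$ (i,j) = vs (Suc i) \<bullet> vs (Suc j)" if "i < n" "j < n" for i j
    using that Mc rowM unfolding G_def by (simp add: row_transpose)
  have "det G = 0" unfolding G_def using det_mult[OF Mc] Mc det_transpose[OF Mc] d0 by simp
  moreover have "upper_triangular G" unfolding upper_triangular_def
    using Gij Gc orth by auto
  hence "det G = (\<Prod> i = 0 ..< n. G $$ (i,i))"
    using det_upper_triangular[OF _ Gc] prod_list_diag_prod[of G] Gc by simp
  moreover have "(\<Prod> i = 0 ..< n. G $$ (i,i)) > 0"
  proof (intro prod_pos)
    fix i assume "i \<in> {0..<n}"
    hence "Suc i \<in> {1..n}" by auto
    thus "G $$ (i,i) > 0" using Gij car nz self_sprod_pos[of "vs (Suc i)" n] by auto
  qed
  ultimately show False by linarith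
qed

theorem lemma2p7:
  fixes n :: nat and E Sg :: "nat set set" and v w :: nat
    and l1 l2 :: real and vs :: "nat \<Rightarrow> real vec"
  defines "L \<equiv> signed_laplacian n E Sg"
  assumes G: "signed_graph n E Sg"
    and vw: "v < n" "w < n" "v \<noteq> w" "{v, w} \<notin> E"
    and Nv: "nbr_minus n E Sg v = {}"
    and Nw: "nbr_minus n E Sg w \<subseteq> nbr n E v \<inter> nbr n E w"
    and siv: "siv_type2 n E Sg v w l1 l2"
    and carrier: "\<forall>j\<in>{1..n}. vs j \<in> carrier_vec n"
    and nonzero: "\<forall>j\<in>{1..n}. vs j \<noteq> 0\<^sub>v n"
    and orth: "\<forall>j\<in>{1..n}. \<forall>k\<in>{1..n}. j \<noteq> k \<longrightarrow> vs j \<bullet> vs k = 0"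
    and eig: "\<forall>j\<in>{1..n}. \<exists>\<mu>. eigenvector L (vs j) \<mu>"
    and eig1: "eigenvector L (vs 1) l1"
    and eig2: "eigenvector L (vs 2) l2"
    and distinct: "l1 \<noteq> l2"
    and norm1: "(vs 1 $ v - vs 1 $ w)\<^sup>2 / (vs 1 \<bullet> vs 1) = 1 + 1 / (l2 - l1)"
    and norm2: "(vs 2 $ v - vs 2 $ w)\<^sup>2 / (vs 2 \<bullet> vs 2) = 1 + 1 / (l1 - l2)"
    and equal_rest: "\<forall>j\<in>{3..n}. vs j $ v = vs j $ w"
    and tail: "\<forall>i\<in>{1, 2}. \<forall>u<n. u \<noteq> v \<longrightarrow> u \<noteq> w \<longrightarrow>
                 vs i $ u = L $$ (u, w) - L $$ (u, v)"
  shows "vs 1 $ v = - l1 + real (vdegree n E w) + 1 \<and> vs 1 $ w = l1 - real (vdegree n E v) - 1 \<and>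
         vs 2 $ v = - l2 + real (vdegree n E w) + 1 \<and> vs 2 $ w = l2 - real (vdegree n E v) - 1"
proof -
  let ?d1 = "real (vdegree n E v)" and ?d2 = "real (vdegree n E w)"
  have Lc: "L \<in> carrier_mat n n" unfolding L_def signed_laplacian_def by simp
  have Lij: "L $$ (i,j) = (if i = j then real (vdegree n E i)
     else if {i, j} \<in> E then (if {i, j} \<in> Sg then 1 else -1) else 0)" if "i < n" "j < n" for i j
    using that unfolding L_def signed_laplacian_def by simp
  have Lnz: "L $$ (i,j) \<noteq> 0 \<longleftrightarrow> {i,j} \<in> E" if "i < n" "j < n" "i \<noteq> j" for i j
    using Lij[OF that(1,2)] that(3) by auto
  have Lvw: "L $$ (v,w) = 0" "L $$ (w,v) = 0"
    using Lij vw by (auto simp: insert_commute)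
  have Lvv: "L $$ (v,v) = ?d1" "L $$ (w,w) = ?d2" using Lij vw by auto
  have noloop: "{x} \<notin> E" for x
  proof
    assume "{x} \<in> E"
    then obtain p q where "{x} = {p,q}" "p \<noteq> q" using G unfolding signed_graph_def by blast
    thus False by (metis doubleton_eq_iff insert_absorb2)
  qed
  have in12: "1 \<in> {1..n}" "2 \<in> {1..n}" using vw by auto
  have x1c: "vs 1 \<in> carrier_vec n" and x2c: "vs 2 \<in> carrier_vec n" using carrier in12 by auto
  have x1nz: "vs 1 \<noteq> 0\<^sub>v n" and x2nz: "vs 2 \<noteq> 0\<^sub>v n" using nonzero in12 by auto
  have o12: "vs 1 \<bullet> vs 2 = 0" "vs 2 \<bullet> vs 1 = 0" using orth in12 by auto
  have N1: "vs 1 \<bullet> vs 1 > 0" using self_sprod_pos[OF x1c x1nz] .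
  have N2: "vs 2 \<bullet> vs 2 > 0" using self_sprod_pos[OF x2c x2nz] .
  have Lx1: "L *\<^sub>v vs 1 = l1 \<cdot>\<^sub>v vs 1" and Lx2: "L *\<^sub>v vs 2 = l2 \<cdot>\<^sub>v vs 2"
    using eig1 eig2 unfolding eigenvector_def by auto
  have Lx1k: "(L *\<^sub>v vs 1) $ k = l1 * vs 1 $ k" if "k < n" for k
    using Lx1 x1c that by simp
  have Lx2k: "(L *\<^sub>v vs 2) $ k = l2 * vs 2 $ k" if "k < n" for k
    using Lx2 x2c that by simp
  define a1 where "a1 = vs 1 $ v"
  define b1 where "b1 = vs 1 $ w"
  define a2 where "a2 = vs 2 $ v"
  define b2 where "b2 = vs 2 $ w"
  define c1 where "c1 = (a1 - b1) / (vs 1 \<bullet> vs 1)"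
  define c2 where "c2 = (a2 - b2) / (vs 2 \<bullet> vs 2)"
  define y :: "real vec" where "y = unit_vec n v - unit_vec n w"
  have yc: "y \<in> carrier_vec n" unfolding y_def by simp
  have yk: "y $ k = (if k = v then 1 else if k = w then -1 else 0)" if "k < n" for k
    using that vw unfolding y_def by auto
  have sy: "x \<bullet> y = x $ v - x $ w" if "x \<in> carrier_vec n" for x
    unfolding y_def using that vw by (simp add: scalar_prod_minus_distrib)
  define z where "z = y - (c1 \<cdot>\<^sub>v vs 1 + c2 \<cdot>\<^sub>v vs 2)"
  have zc: "z \<in> carrier_vec n" unfolding z_def using yc x1c x2c by simp
  have zs: "vs j \<bullet> z = (vs j $ v - vs j $ w) - (c1 * (vs j \<bullet> vs 1) + c2 * (vs j \<bullet> vs 2))"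
    if "vs j \<in> carrier_vec n" for j
    unfolding z_def using that x1c x2c yc sy
    by (simp add: scalar_prod_minus_distrib[of _ n] scalar_prod_add_distrib[of _ n])
  have "\<forall>j\<in>{1..n}. vs j \<bullet> z = 0"
  proof
    fix j assume j: "j \<in> {1..n}"
    hence jc: "vs j \<in> carrier_vec n" using carrier by auto
    show "vs j \<bullet> z = 0"
    proof (cases "j = 1")
      case True
      thus ?thesis using zs[OF jc] o12 N1 unfolding c1_def a1_def b1_def by simp
    next
      case n1: False
      show ?thesis
      proof (cases "j = 2")
        case True
        thus ?thesis using zs[OF jc] o12 N2 unfolding c2_def a2_def b2_def by simp
      next
        case False
        hence "j \<in> {3..n}" using n1 j by auto
        hence "vs j $ v = vs j $ w" using equal_rest by auto
        moreover have "vs j \<bullet> vs 1 = 0" "vs j \<bullet> vs 2 = 0" using orth j in12 n1 False by auto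
        ultimately show ?thesis using zs[OF jc] by simp
      qed
    qed
  qed
  hence z0: "z = 0\<^sub>v n" using orth_complete[OF carrier nonzero orth zc] by blast
  have yeq: "y = c1 \<cdot>\<^sub>v vs 1 + c2 \<cdot>\<^sub>v vs 2"
  proof (rule eq_vecI)
    fix k assume "k < dim_vec (c1 \<cdot>\<^sub>v vs 1 + c2 \<cdot>\<^sub>v vs 2)"
    hence k: "k < n" using x1c x2c by simp
    have "z $ k = 0" using z0 k by simp
    thus "y $ k = (c1 \<cdot>\<^sub>v vs 1 + c2 \<cdot>\<^sub>v vs 2) $ k" unfolding z_def using k yc x1c x2c by simp
  qed (use yc x1c x2c in simp)
  have K1: "y $ k = c1 * vs 1 $ k + c2 * vs 2 $ k" if "k < n" for k
    using yeq that x1c x2c by simp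
  have Ly: "L *\<^sub>v y = c1 \<cdot>\<^sub>v (L *\<^sub>v vs 1) + c2 \<cdot>\<^sub>v (L *\<^sub>v vs 2)"
    unfolding yeq using Lc x1c x2c
    by (simp add: mult_add_distrib_mat_vec[OF Lc] mult_mat_vec[OF Lc])
  have Lyk: "(L *\<^sub>v y) $ k = L $$ (k,v) - L $$ (k,w)" if "k < n" for k
    using that Lc sy[of "row L k"] vw by (simp add: row_def)
  have K2: "L $$ (k,v) - L $$ (k,w) = c1 * l1 * vs 1 $ k + c2 * l2 * vs 2 $ k" if "k < n" for k
  proof -
    have "(L *\<^sub>v y) $ k = c1 * (L *\<^sub>v vs 1) $ k + c2 * (L *\<^sub>v vs 2) $ k"
      unfolding Ly using that Lc by simp
    thus ?thesis using Lyk[OF that] Lx1k[OF that] Lx2k[OF that] by simp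
  qed
  have h1: "1 = c1 * a1 + c2 * a2" using K1[of v] yk[of v] vw unfolding a1_def a2_def by simp
  have h2: "-1 = c1 * b1 + c2 * b2" using K1[of w] yk[of w] vw unfolding b1_def b2_def by simp
  have h3: "?d1 = c1 * l1 * a1 + c2 * l2 * a2" using K2[of v] Lvw Lvv vw unfolding a1_def a2_def by simp
  have h4: "- ?d2 = c1 * l1 * b1 + c2 * l2 * b2" using K2[of w] Lvw Lvv vw unfolding b1_def b2_def by simp
  have h7: "c1 * (a1 - b1) = 1 + 1 / (l2 - l1)"
    using norm1 unfolding c1_def a1_def b1_def by (simp add: power2_eq_square)
  show ?thesis
  proof (cases "\<exists>u<n. u \<noteq> v \<and> u \<noteq> w \<and> L $$ (u,w) - L $$ (u,v) \<noteq> 0")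
    case True
    then obtain u where u: "u < n" "u \<noteq> v" "u \<noteq> w" and t: "L $$ (u,w) - L $$ (u,v) \<noteq> 0" by blast
    have t1: "vs 1 $ u = L $$ (u,w) - L $$ (u,v)" and t2: "vs 2 $ u = L $$ (u,w) - L $$ (u,v)"
      using tail u by auto
    define t where "t = L $$ (u,w) - L $$ (u,v)"
    have tn: "t \<noteq> 0" using t unfolding t_def .
    have e1: "0 = c1 * t + c2 * t" using K1[OF u(1)] yk[OF u(1)] u t1 t2 unfolding t_def by simp
    have "0 = (c1 + c2) * t" using e1 by (simp add: distrib_right)
    hence h5: "c2 = - c1" using tn by simp
    have e2: "- t = c1 * l1 * t + c2 * l2 * t" using K2[OF u(1)] t1 t2 unfolding t_def by simp
    have "(c1 * (l1 - l2) + 1) * t = 0" using e2 h5 by (simp add: algebra_simps)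
    hence h6: "c1 * (l1 - l2) = -1" using tn by simp
    define dl where "dl = l1 - l2"
    have dn: "dl \<noteq> 0" using distinct unfolding dl_def by simp
    have cd: "c1 * dl = -1" using h6 unfolding dl_def .
    have g1: "c1 * (a1 - a2) = 1" using h1 h5 by (simp add: algebra_simps)
    have g2: "c1 * (b1 - b2) = -1" using h2 h5 by (simp add: algebra_simps)
    have g3: "c1 * (l1 * a1 - l2 * a2) = ?d1" using h3 h5 by (simp add: algebra_simps)
    have g4: "c1 * (l1 * b1 - l2 * b2) = - ?d2" using h4 h5 by (simp add: algebra_simps)
    have g7: "c1 * (a1 - b1) = 1 - 1 / dl" using h7 unfolding dl_def
      by (metis add_uminus_conv_diff divide_minus_right minus_diff_eq)
    have mul: "p = - q * dl" if "c1 * p = q" for p q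
    proof -
      have "c1 * dl * p = q * dl" using that by (simp add: algebra_simps)
      thus ?thesis using cd by simp
    qed
    have f1: "a1 - a2 = - dl" using mul[OF g1] by simp
    have f2: "b1 - b2 = dl" using mul[OF g2] by simp
    have f3: "l1 * a1 - l2 * a2 = - ?d1 * dl" using mul[OF g3] by simp
    have f4: "l1 * b1 - l2 * b2 = ?d2 * dl" using mul[OF g4] by simp
    have f7: "a1 - b1 = 1 - dl" using mul[OF g7] dn by (simp add: algebra_simps)
    have "dl * a1 = dl * (l2 - ?d1)"
    proof -
      have ae: "a2 = a1 + dl" using f1 by simp
      have "l1 * a1 - l2 * a2 = dl * a1 - l2 * dl" unfolding ae dl_def by (simp add: algebra_simps)
      thus ?thesis using f3 by (simp add: algebra_simps)
    qed
    hence A1: "a1 = l2 - ?d1" using dn by simp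
    have "dl * b1 = dl * (?d2 - l2)"
    proof -
      have be: "b2 = b1 - dl" using f2 by simp
      have "l1 * b1 - l2 * b2 = dl * b1 + l2 * dl" unfolding be dl_def by (simp add: algebra_simps)
      thus ?thesis using f4 by (simp add: algebra_simps)
    qed
    hence B1: "b1 = ?d2 - l2" using dn by simp
    have S: "l1 + l2 = 1 + ?d1 + ?d2" using f7 A1 B1 unfolding dl_def by simp
    have A2: "a2 = a1 + dl" using f1 by simp
    have B2: "b2 = b1 - dl" using f2 by simp
    show ?thesis using A1 B1 A2 B2 S unfolding a1_def b1_def a2_def b2_def dl_def by simp
  next
    case False
    hence tz: "L $$ (u,w) = L $$ (u,v)" if "u < n" "u \<noteq> v" "u \<noteq> w" for u
      using that by auto
    have tl0: "vs i $ u = 0" if "i \<in> {1,2}" "u < n" "u \<noteq> v" "u \<noteq> w" for i u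
      using tail that tz by auto
    have nb: "nbr n E v = nbr n E w"
    proof (rule Set.set_eqI)
      fix x
      show "x \<in> nbr n E v \<longleftrightarrow> x \<in> nbr n E w"
      proof (cases "x = v \<or> x = w")
        case True
        thus ?thesis using noloop vw(4) unfolding nbr_def by (auto simp: insert_commute)
      next
        case False
        show ?thesis
        proof (cases "x < n")
          case True
          have "{v,x} \<in> E \<longleftrightarrow> L $$ (x,v) \<noteq> 0" using Lnz[OF True vw(1)] False by (auto simp: insert_commute)
          moreover have "{w,x} \<in> E \<longleftrightarrow> L $$ (x,w) \<noteq> 0" using Lnz[OF True vw(2)] False by (auto simp: insert_commute)
          ultimately show ?thesis using tz[OF True] False True unfolding nbr_def by auto
        qed (auto simp: nbr_def)
      qed
    qed
    hence dd: "?d1 = ?d2" unfolding vdegree_def by simp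
    have rowev: "(L *\<^sub>v vs i) $ k = L $$ (k,v) * vs i $ v + L $$ (k,w) * vs i $ w"
      if i: "i \<in> {1,2}" and k: "k < n" for i k
    proof -
      have ic: "vs i \<in> carrier_vec n" using i x1c x2c by auto
      have "(L *\<^sub>v vs i) $ k = (\<Sum>j\<in>{0..<n}. L $$ (k,j) * vs i $ j)"
        using k Lc ic by (simp add: scalar_prod_def row_def)
      also have "\<dots> = (\<Sum>j\<in>{v,w}. L $$ (k,j) * vs i $ j)"
        using vw tl0[OF i] by (intro sum.mono_neutral_right) auto
      also have "\<dots> = L $$ (k,v) * vs i $ v + L $$ (k,w) * vs i $ w" using vw by simp
      finally show ?thesis .
    qed
    have ev: "?d1 * vs i $ v = l * vs i $ v" "?d1 * vs i $ w = l * vs i $ w"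
      if i: "i \<in> {1,2}" and l: "(L *\<^sub>v vs i) = l \<cdot>\<^sub>v vs i" for i l
    proof -
      have ic: "vs i \<in> carrier_vec n" using i x1c x2c by auto
      show "?d1 * vs i $ v = l * vs i $ v" using rowev[OF i vw(1)] l Lvv Lvw ic vw by auto
      show "?d1 * vs i $ w = l * vs i $ w" using rowev[OF i vw(2)] l Lvv Lvw ic vw dd by auto
    qed
    have nzvw: "vs i $ v \<noteq> 0 \<or> vs i $ w \<noteq> 0" if i: "i \<in> {1,2}" for i
    proof (rule ccontr)
      assume "\<not> ?thesis"
      hence "vs i = 0\<^sub>v n" using tl0[OF i] i x1c x2c by (intro eq_vecI) auto
      thus False using i x1nz x2nz by auto
    qed
    have "l1 = ?d1" using ev[of 1 l1] Lx1 nzvw[of 1] by auto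
    moreover have "l2 = ?d1" using ev[of 2 l2] Lx2 nzvw[of 2] by auto
    ultimately show ?thesis using distinct by simp
  qed
qed

end
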